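(* Let $d\ge 2$ and let $\{(G_\nu,S_\nu,|\cdot|_\nu)\}_{\nu\in\mathbb{N}}$ be a non-$\ell_1$-expanding similar family of groups of automorphisms of $T_d$. Then for every $\nu\in\mathbb{N}$, $\kappa_\nu\le\kappa_{\nu+1}$.
   Context: $T_d$ is the $d$-regular rooted tree; $\mathrm{Sym}(d)$ acts by rooted automorphisms, and every $g\in\mathrm{Aut}(T_d)$ is uniquely $g=(g_1,\dots,g_d)\tau$ with $\tau\in\mathrm{Sym}(d)$ and $g_i$ the restriction of $g\tau^{-1}$ to the subtree at the $i$-th child of the root. A pseudolength on a finite symmetric generating set $S$ of $G$ is a map $S\to\{0,1\}$; the word pseudonorm is $|g|=\min\{\sum_i|s_i| : g=s_1\cdots s_k,\ s_i\in S\}$; it is proper if the subgroup generated by the length-$0$ generators is finite. A non-$\ell_1$-expanding similar family is a family $\{(G_\nu,S_\nu,|\cdot|_\nu)\}_{\nu\in\mathbb{N}}$ where each $G_\nu\le\mathrm{Aut}(T_d)$ acts transitively on each level, is generated by the finite symmetric set $S_\nu$ and carries a proper word pseudonorm $|\cdot|_\nu$, such that every $g\in G_\nu$ is $g=(g_1,\dots,g_d)\tau$ with $g_i\in G_{\nu+1}$, $\tau\in\mathrm{Sym}(d)$ and $\sum_{i=1}^d|g_i|_{\nu+1}\le|g|_\nu$. $\gamma_\nu(n)=|\{g\in G_\nu : |g|_\nu\le n\}|$ and $\kappa_\nu=\lim_{n\to\infty}\gamma_\nu(n)^{1/n}$ is the exponential growth rate (this limit exists). *)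

theory Defs
  imports "HOL-Analysis.Analysis"
begin

text \<open>Vertices of the d-regular rooted tree T_d: finite words over the alphabet {0..<d};
  the root is the empty word.  Automorphisms are represented as functions on
  nat list that act as the identity outside the vertex set.\<close>

definition tree_vertices :: "nat \<Rightarrow> nat list set" where
  "tree_vertices d = lists {0..<d}"

definition tree_aut :: "nat \<Rightarrow> (nat list \<Rightarrow> nat list) \<Rightarrow> bool" where
  "tree_aut d f \<longleftrightarrow>
     bij_betw f (tree_vertices d) (tree_vertices d) \<and>
     f [] = [] \<and>
     (\<forall>w \<in> tree_vertices d. \<forall>a < d. \<exists>b < d. f (w @ [a]) = f w @ [b]) \<and>
     (\<forall>w. w \<notin> tree_vertices d \<longrightarrow> f w = w)"

definition aut_inv :: "nat \<Rightarrow> (nat list \<Rightarrow> nat list) \<Rightarrow> (nat list \<Rightarrow> nat list)" where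
  "aut_inv d f = (\<lambda>w. if w \<in> tree_vertices d then inv_into (tree_vertices d) f w else w)"

definition prod_word :: "(nat list \<Rightarrow> nat list) list \<Rightarrow> (nat list \<Rightarrow> nat list)" where
  "prod_word xs = foldr (\<circ>) xs id"

definition generated :: "(nat list \<Rightarrow> nat list) set \<Rightarrow> (nat list \<Rightarrow> nat list) set" where
  "generated S = {prod_word xs | xs. xs \<in> lists S}"

definition subgroup_gen :: "nat \<Rightarrow> (nat list \<Rightarrow> nat list) set \<Rightarrow> (nat list \<Rightarrow> nat list) set" where
  "subgroup_gen d A = generated (A \<union> aut_inv d ` A)"

definition word_pnorm :: "(nat list \<Rightarrow> nat list) set \<Rightarrow> ((nat list \<Rightarrow> nat list) \<Rightarrow> nat)
     \<Rightarrow> (nat list \<Rightarrow> nat list) \<Rightarrow> nat" where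
  "word_pnorm S l g = (LEAST n. \<exists>xs \<in> lists S. prod_word xs = g \<and> sum_list (map l xs) = n)"

text \<open>Section of g at the first-level vertex x: w \<mapsto> tail of g(x w).
  For g = (g_1,...,g_d) tau these are exactly the g_i (up to reindexing by tau).\<close>
definition aut_section :: "nat \<Rightarrow> (nat list \<Rightarrow> nat list) \<Rightarrow> nat \<Rightarrow> (nat list \<Rightarrow> nat list)" where
  "aut_section d g x = (\<lambda>w. if w \<in> tree_vertices d then tl (g (x # w)) else w)"

definition level_transitive :: "nat \<Rightarrow> (nat list \<Rightarrow> nat list) set \<Rightarrow> bool" where
  "level_transitive d G \<longleftrightarrow>
     (\<forall>u \<in> tree_vertices d. \<forall>v \<in> tree_vertices d. length u = length v \<longrightarrow> (\<exists>g \<in> G. g u = v))"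

definition non_l1_expanding_similar_family ::
  "nat \<Rightarrow> (nat \<Rightarrow> (nat list \<Rightarrow> nat list) set) \<Rightarrow> (nat \<Rightarrow> (nat list \<Rightarrow> nat list) set)
     \<Rightarrow> (nat \<Rightarrow> (nat list \<Rightarrow> nat list) \<Rightarrow> nat) \<Rightarrow> bool" where
  "non_l1_expanding_similar_family d G S l \<longleftrightarrow>
     (\<forall>\<nu>.
        finite (S \<nu>) \<and> S \<nu> \<subseteq> {f. tree_aut d f} \<and>
        (\<forall>s \<in> S \<nu>. aut_inv d s \<in> S \<nu>) \<and>
        G \<nu> = generated (S \<nu>) \<and>
        level_transitive d (G \<nu>) \<and>
        (\<forall>s \<in> S \<nu>. l \<nu> s \<in> {0, 1}) \<and>
        finite (subgroup_gen d {s \<in> S \<nu>. l \<nu> s = 0}) \<and>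
        (\<forall>g \<in> G \<nu>. (\<forall>x < d. aut_section d g x \<in> G (Suc \<nu>)) \<and>
           (\<Sum>x<d. word_pnorm (S (Suc \<nu>)) (l (Suc \<nu>)) (aut_section d g x))
              \<le> word_pnorm (S \<nu>) (l \<nu>) g))"

definition growth_fun ::
  "(nat \<Rightarrow> (nat list \<Rightarrow> nat list) set) \<Rightarrow> (nat \<Rightarrow> (nat list \<Rightarrow> nat list) set)
     \<Rightarrow> (nat \<Rightarrow> (nat list \<Rightarrow> nat list) \<Rightarrow> nat) \<Rightarrow> nat \<Rightarrow> nat \<Rightarrow> nat" where
  "growth_fun G S l \<nu> n = card {g \<in> G \<nu>. word_pnorm (S \<nu>) (l \<nu>) g \<le> n}"

definition exp_growth_rate ::
  "(nat \<Rightarrow> (nat list \<Rightarrow> nat list) set) \<Rightarrow> (nat \<Rightarrow> (nat list \<Rightarrow> nat list) set)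
     \<Rightarrow> (nat \<Rightarrow> (nat list \<Rightarrow> nat list) \<Rightarrow> nat) \<Rightarrow> nat \<Rightarrow> real" where
  "exp_growth_rate G S l \<nu> = lim (\<lambda>n. root n (real (growth_fun G S l \<nu> n)))"

end

theory Submission
  imports Defs "HOL-Real_Asymp.Real_Asymp"
begin

definition W :: "(nat list \<Rightarrow> nat list) set \<Rightarrow> ((nat list \<Rightarrow> nat list) \<Rightarrow> nat) \<Rightarrow> nat \<Rightarrow> (nat list \<Rightarrow> nat list) set" where
  "W S l n = {prod_word xs | xs. xs \<in> lists S \<and> sum_list (map l xs) \<le> n}"

lemma prod_word_Nil[simp]: "prod_word [] = id" by (simp add: prod_word_def)
lemma prod_word_Cons[simp]: "prod_word (x#xs) = x \<circ> prod_word xs" by (simp add: prod_word_def)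
lemma prod_word_append[simp]: "prod_word (xs@ys) = prod_word xs \<circ> prod_word ys"
  by (induction xs) auto

lemma ball_eq: "{g \<in> generated S. word_pnorm S l g \<le> n} = W S l n"
proof
  show "{g \<in> generated S. word_pnorm S l g \<le> n} \<subseteq> W S l n"
  proof
    fix g assume g: "g \<in> {g \<in> generated S. word_pnorm S l g \<le> n}"
    then obtain xs where xs: "xs \<in> lists S" "prod_word xs = g" unfolding generated_def by auto
    have ex: "\<exists>m. \<exists>xs \<in> lists S. prod_word xs = g \<and> sum_list (map l xs) = m" using xs by auto
    from LeastI_ex[OF ex] obtain ys where "ys \<in> lists S" "prod_word ys = g"
       "sum_list (map l ys) = word_pnorm S l g" unfolding word_pnorm_def by blast
    then show "g \<in> W S l n" using g unfolding W_def by auto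
  qed
next
  show "W S l n \<subseteq> {g \<in> generated S. word_pnorm S l g \<le> n}"
  proof
    fix g assume "g \<in> W S l n"
    then obtain xs where xs: "xs \<in> lists S" "prod_word xs = g" "sum_list (map l xs) \<le> n"
      unfolding W_def by auto
    have "word_pnorm S l g \<le> sum_list (map l xs)" unfolding word_pnorm_def
      by (rule Least_le) (use xs in auto)
    then show "g \<in> {g \<in> generated S. word_pnorm S l g \<le> n}"
      using xs unfolding generated_def by auto
  qed
qed

lemma split_weight:
  assumes "\<forall>x\<in>set xs. l x \<le> (1::nat)" "sum_list (map l xs) \<le> m + n"
  shows "\<exists>ys zs. xs = ys @ zs \<and> sum_list (map l ys) \<le> m \<and> sum_list (map l zs) \<le> n"
  using assms
proof (induction xs arbitrary: m)
  case Nil then show ?case by auto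
next
  case (Cons x xs)
  show ?case
  proof (cases "m = 0")
    case True then show ?thesis using Cons.prems by (intro exI[of _ "[]"] exI[of _ "x#xs"]) auto
  next
    case False
    show ?thesis
    proof (cases "l x = 0")
      case True
      then obtain ys zs where "xs = ys @ zs" "sum_list (map l ys) \<le> m" "sum_list (map l zs) \<le> n"
        using Cons.IH[of m] Cons.prems by auto
      then show ?thesis using True by (intro exI[of _ "x#ys"] exI[of _ zs]) auto
    next
      case False
      then have lx: "l x = 1" using Cons.prems by auto
      then obtain ys zs where "xs = ys @ zs" "sum_list (map l ys) \<le> m - 1" "sum_list (map l zs) \<le> n"
      proof -
        have "sum_list (map l xs) \<le> (m - 1) + n" using Cons.prems lx \<open>m \<noteq> 0\<close> by auto
        then show ?thesis using Cons.IH[of "m - 1"] Cons.prems that by auto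
      qed
      then show ?thesis using lx \<open>m \<noteq> 0\<close> by (intro exI[of _ "x#ys"] exI[of _ zs]) auto
    qed
  qed
qed

lemma W_mono: "m \<le> n \<Longrightarrow> W S l m \<subseteq> W S l n"
  unfolding W_def by auto

lemma id_W: "id \<in> W S l n"
  unfolding W_def by (auto intro!: exI[of _ "[]"])

lemma W_mult:
  assumes "\<forall>s\<in>S. l s \<le> (1::nat)"
  shows "W S l (m+n) \<subseteq> (\<lambda>(a,b). a \<circ> b) ` (W S l m \<times> W S l n)"
proof
  fix g assume "g \<in> W S l (m+n)"
  then obtain xs where xs: "xs \<in> lists S" "g = prod_word xs" "sum_list (map l xs) \<le> m+n"
    unfolding W_def by auto
  then obtain ys zs where yz: "xs = ys @ zs" "sum_list (map l ys) \<le> m" "sum_list (map l zs) \<le> n"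
    using split_weight[of xs l m n] assms by auto
  have "prod_word ys \<in> W S l m" "prod_word zs \<in> W S l n" using yz xs unfolding W_def by auto
  then show "g \<in> (\<lambda>(a,b). a \<circ> b) ` (W S l m \<times> W S l n)"
    using xs yz by (auto intro!: image_eqI[of _ _ "(prod_word ys, prod_word zs)"])
qed

lemma W0_sub: "W S l 0 \<subseteq> generated {s\<in>S. l s = 0}"
  unfolding W_def generated_def by auto

lemma W_Suc_sub:
  "W S l (Suc n) \<subseteq> W S l 0 \<union> (\<lambda>((a,s),b). a \<circ> s \<circ> b) ` ((W S l 0 \<times> S) \<times> W S l n)"
proof
  fix g assume "g \<in> W S l (Suc n)"
  then obtain xs where xs: "xs \<in> lists S" "g = prod_word xs" "sum_list (map l xs) \<le> Suc n"
    unfolding W_def by auto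
  show "g \<in> W S l 0 \<union> (\<lambda>((a,s),b). a \<circ> s \<circ> b) ` ((W S l 0 \<times> S) \<times> W S l n)"
  proof (cases "\<exists>x\<in>set xs. l x \<noteq> 0")
    case False
    then have "sum_list (map l xs) = 0" by (simp add: sum_list_eq_0_iff)
    then show ?thesis using xs unfolding W_def by auto
  next
    case True
    then obtain ys x zs where d: "xs = ys @ x # zs" "l x \<noteq> 0" "\<forall>y\<in>set ys. \<not> l y \<noteq> 0"
      using split_list_first_prop[OF True] by blast
    have "sum_list (map l ys) = 0" using d(3) by (simp add: sum_list_eq_0_iff)
    then have a: "prod_word ys \<in> W S l 0" using xs d unfolding W_def by auto
    have "sum_list (map l zs) \<le> n" using xs(3) d by auto
    then have b: "prod_word zs \<in> W S l n" using xs d unfolding W_def by auto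
    have s: "x \<in> S" using xs d by auto
    have "g = (\<lambda>((a,s),b). a \<circ> s \<circ> b) ((prod_word ys, x), prod_word zs)"
      using xs d by (simp add: comp_assoc)
    then show ?thesis using a b s by blast
  qed
qed

lemma finite_W:
  assumes "finite S" "finite (generated {s\<in>S. l s = 0})"
  shows "finite (W S l n)"
proof (induction n)
  case 0 then show ?case using W0_sub assms(2) finite_subset by blast
next
  case (Suc n)
  have f0: "finite (W S l 0)" using W0_sub assms(2) finite_subset by blast
  show ?case
    by (rule finite_subset[OF W_Suc_sub]) (use f0 Suc assms(1) in auto)
qed

lemma card_W_mult:
  assumes "finite S" "finite (generated {s\<in>S. l s = 0})" "\<forall>s\<in>S. l s \<le> (1::nat)"
  shows "card (W S l (m+n)) \<le> card (W S l m) * card (W S l n)"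
proof -
  have "card (W S l (m+n)) \<le> card ((\<lambda>(a,b). a \<circ> b) ` (W S l m \<times> W S l n))"
    by (rule card_mono) (use W_mult[OF assms(3)] finite_W[OF assms(1,2)] in auto)
  also have "\<dots> \<le> card (W S l m \<times> W S l n)" by (rule card_image_le) (use finite_W[OF assms(1,2)] in auto)
  also have "\<dots> = card (W S l m) * card (W S l n)" by (rule card_cartesian_product)
  finally show ?thesis .
qed

lemma card_W_pos:
  assumes "finite S" "finite (generated {s\<in>S. l s = 0})"
  shows "card (W S l n) \<ge> 1"
  using id_W finite_W[OF assms] by (metis One_nat_def Suc_leI card_gt_0_iff empty_iff)


lemma tree_aut_out: "tree_aut d f \<Longrightarrow> w \<notin> tree_vertices d \<Longrightarrow> f w = w"
  unfolding tree_aut_def by (elim conjE) simp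

lemma tree_aut_root: "tree_aut d f \<Longrightarrow> f [] = []"
  unfolding tree_aut_def by (elim conjE)

lemma tree_aut_bij: "tree_aut d f \<Longrightarrow> bij_betw f (tree_vertices d) (tree_vertices d)"
  unfolding tree_aut_def by (elim conjE)

lemma tree_aut_child: "tree_aut d f \<Longrightarrow> w \<in> tree_vertices d \<Longrightarrow> a < d \<Longrightarrow> \<exists>b<d. f (w @ [a]) = f w @ [b]"
  unfolding tree_aut_def by (elim conjE) (drule bspec, assumption, erule allE, erule mp, assumption)

lemma tree_aut_id: "tree_aut d id"
  unfolding tree_aut_def by (simp add: bij_betw_id)

lemma tree_aut_comp:
  assumes f: "tree_aut d f" and g: "tree_aut d g"
  shows "tree_aut d (f \<circ> g)"
proof -
  have bf: "bij_betw f (tree_vertices d) (tree_vertices d)" and bg: "bij_betw g (tree_vertices d) (tree_vertices d)"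
    using f g by (auto intro: tree_aut_bij)
  have "bij_betw (f \<circ> g) (tree_vertices d) (tree_vertices d)" by (rule bij_betw_trans[OF bg bf])
  moreover have "\<forall>w \<in> tree_vertices d. \<forall>a < d. \<exists>b < d. (f\<circ>g) (w @ [a]) = (f\<circ>g) w @ [b]"
  proof (intro ballI allI impI)
    fix w a assume w: "w \<in> tree_vertices d" and a: "a < d"
    obtain c where c: "c < d" "g (w @ [a]) = g w @ [c]" using tree_aut_child[OF g w a] by blast
    have gw: "g w \<in> tree_vertices d" using bg w by (rule bij_betw_apply)
    obtain b where "b < d" "f (g w @ [c]) = f (g w) @ [b]" using tree_aut_child[OF f gw c(1)] by blast
    then show "\<exists>b < d. (f\<circ>g) (w @ [a]) = (f\<circ>g) w @ [b]" using c by auto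
  qed
  moreover have "(f \<circ> g) [] = []" using tree_aut_root[OF f] tree_aut_root[OF g] by simp
  moreover have "\<forall>w. w \<notin> tree_vertices d \<longrightarrow> (f \<circ> g) w = w"
    using tree_aut_out[OF f] tree_aut_out[OF g] by simp
  ultimately show ?thesis unfolding tree_aut_def by (intro conjI)
qed

lemma prod_word_aut: "set xs \<subseteq> {f. tree_aut d f} \<Longrightarrow> tree_aut d (prod_word xs)"
proof (induction xs)
  case Nil
  have "prod_word [] = id" by (simp add: prod_word_def)
  then show ?case using tree_aut_id by metis
next
  case (Cons x xs)
  have e: "prod_word (x#xs) = x \<circ> prod_word xs" by (simp add: prod_word_def)
  have "tree_aut d x" "set xs \<subseteq> {f. tree_aut d f}" using Cons.prems by auto
  then show ?case unfolding e using Cons.IH tree_aut_comp by blast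
qed

lemma aut_level1:
  assumes "tree_aut d f" "x < d"
  shows "\<exists>b<d. f [x] = [b]"
proof -
  have "[] \<in> tree_vertices d" unfolding tree_vertices_def by simp
  then obtain b where "b < d" "f ([] @ [x]) = f [] @ [b]" using tree_aut_child[OF assms(1) _ assms(2)] by blast
  moreover have "f [] = []" using tree_aut_root[OF assms(1)] .
  ultimately show ?thesis by auto
qed

lemma aut_prefix:
  assumes f: "tree_aut d f" and x: "x < d"
  shows "w \<in> tree_vertices d \<Longrightarrow> \<exists>r. f (x#w) = f [x] @ r"
proof (induction w rule: rev_induct)
  case Nil then show ?case by auto
next
  case (snoc a w)
  have w: "w \<in> tree_vertices d" and a: "a < d" using snoc.prems unfolding tree_vertices_def by auto
  have xw: "x # w \<in> tree_vertices d" using w x unfolding tree_vertices_def by auto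
  obtain r where r: "f (x#w) = f [x] @ r" using snoc.IH w by auto
  obtain b where "f ((x#w) @ [a]) = f (x#w) @ [b]" using tree_aut_child[OF f xw a] by blast
  then have "f (x # w @ [a]) = f [x] @ (r @ [b])" using r by simp
  then show ?case by blast
qed

lemma aut_eq:
  assumes f: "tree_aut d f" and g: "tree_aut d g"
    and lev: "\<forall>x<d. f [x] = g [x]"
    and sec: "\<forall>x<d. aut_section d f x = aut_section d g x"
  shows "f = g"
proof
  fix v
  show "f v = g v"
  proof (cases "v \<in> tree_vertices d")
    case False then show ?thesis using tree_aut_out[OF f False] tree_aut_out[OF g False] by simp
  next
    case True
    show ?thesis
    proof (cases v)
      case Nil then show ?thesis using tree_aut_root[OF f] tree_aut_root[OF g] by simp
    next
      case (Cons x w)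
      have x: "x < d" and w: "w \<in> tree_vertices d" using True Cons unfolding tree_vertices_def by auto
      obtain b where b: "f [x] = [b]" using aut_level1[OF f x] by auto
      obtain r where r: "f (x#w) = f [x] @ r" using aut_prefix[OF f x w] by auto
      obtain r' where r': "g (x#w) = g [x] @ r'" using aut_prefix[OF g x w] by auto
      have "aut_section d f x w = aut_section d g x w" using sec x by simp
      then have tl: "tl (f (x#w)) = tl (g (x#w))" using w unfolding aut_section_def by simp
      have gb: "g [x] = [b]" using lev x b by metis
      have "f (x#w) = b # r" using b r by simp
      moreover have "g (x#w) = b # r'" using gb r' by simp
      ultimately have "f (x#w) = g (x#w)" using tl by simp
      then show ?thesis using Cons by simp
    qed
  qed
qed


lemma W_sub_gen: "W S l n \<subseteq> generated S"
  unfolding W_def generated_def by auto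

lemma W_pnorm: "h \<in> W S l n \<Longrightarrow> word_pnorm S l h \<le> n"
  using ball_eq[of S l n] by blast

lemma generated_aut: "S \<subseteq> {f. tree_aut d f} \<Longrightarrow> g \<in> generated S \<Longrightarrow> tree_aut d g"
  unfolding generated_def using prod_word_aut[of _ d] by auto

lemma count:
  assumes aut: "S0 \<subseteq> {f. tree_aut d f}"
    and sec: "\<forall>g\<in>generated S0. (\<forall>x<d. aut_section d g x \<in> generated S1) \<and>
        (\<Sum>x<d. word_pnorm S1 l1 (aut_section d g x)) \<le> word_pnorm S0 l0 g"
    and fin1: "finite (W S1 l1 n)" and a: "a \<ge> (1::real)"
  shows "real (card (W S0 l0 n)) \<le> real (card (PiE {..<d} (\<lambda>_. (\<lambda>b. [b]) ` {..<d}))) *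
           (a^n * (\<Sum>h\<in>W S1 l1 n. (1/a)^(word_pnorm S1 l1 h))^d)"
proof -
  define pn1 where "pn1 = word_pnorm S1 l1"
  define L1 where "L1 = PiE {..<d} (\<lambda>_. (\<lambda>b::nat. [b]) ` {..<d})"
  define P where "P = PiE {..<d} (\<lambda>_. W S1 l1 n)"
  define T where "T = {t \<in> P. (\<Sum>i<d. pn1 (t i)) \<le> n}"
  define \<Phi> where "\<Phi> = (\<lambda>g::nat list \<Rightarrow> nat list. (restrict (\<lambda>x. g [x]) {..<d}, restrict (aut_section d g) {..<d}))"
  have finP: "finite P" unfolding P_def using fin1 by (intro finite_PiE) auto
  have finT: "finite T" unfolding T_def using finP by auto
  have finL: "finite L1" unfolding L1_def by (intro finite_PiE) auto
  have img: "\<Phi> ` W S0 l0 n \<subseteq> L1 \<times> T"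
  proof
    fix y assume "y \<in> \<Phi> ` W S0 l0 n"
    then obtain g where g: "g \<in> W S0 l0 n" and y: "y = \<Phi> g" by auto
    have gG: "g \<in> generated S0" using g W_sub_gen by blast
    have gn: "word_pnorm S0 l0 g \<le> n" using W_pnorm[OF g] .
    have ga: "tree_aut d g" using generated_aut[OF aut gG] .
    have s1: "\<And>x. x < d \<Longrightarrow> aut_section d g x \<in> generated S1" using sec gG by blast
    have s2: "(\<Sum>x<d. pn1 (aut_section d g x)) \<le> n" using sec gG gn unfolding pn1_def by fastforce
    have s3: "pn1 (aut_section d g x) \<le> n" if "x < d" for x
    proof -
      have "pn1 (aut_section d g x) \<le> (\<Sum>x<d. pn1 (aut_section d g x))"
        by (rule member_le_sum) (use that in auto)
      then show ?thesis using s2 by linarith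
    qed
    have s4: "aut_section d g x \<in> W S1 l1 n" if "x < d" for x
      using s1[OF that] s3[OF that] ball_eq[of S1 l1 n] unfolding pn1_def by blast
    have "restrict (\<lambda>x. g [x]) {..<d} \<in> L1"
      unfolding L1_def using aut_level1[OF ga] by (auto simp: PiE_def Pi_def)
    moreover have "restrict (aut_section d g) {..<d} \<in> T"
      unfolding T_def P_def using s4 s2 by (auto simp: PiE_def Pi_def)
    ultimately show "y \<in> L1 \<times> T" using y unfolding \<Phi>_def by auto
  qed
  have inj: "inj_on \<Phi> (W S0 l0 n)"
  proof (rule inj_onI)
    fix f g assume f: "f \<in> W S0 l0 n" and g: "g \<in> W S0 l0 n" and e: "\<Phi> f = \<Phi> g"
    have fa: "tree_aut d f" using generated_aut[OF aut] f W_sub_gen by blast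
    have ga: "tree_aut d g" using generated_aut[OF aut] g W_sub_gen by blast
    have e1: "restrict (\<lambda>x. f [x]) {..<d} = restrict (\<lambda>x. g [x]) {..<d}"
      and e2: "restrict (aut_section d f) {..<d} = restrict (aut_section d g) {..<d}"
      using e unfolding \<Phi>_def by auto
    have "\<forall>x<d. f [x] = g [x]"
    proof (intro allI impI)
      fix x assume "x < d"
      then show "f [x] = g [x]" using fun_cong[OF e1, of x] by simp
    qed
    moreover have "\<forall>x<d. aut_section d f x = aut_section d g x"
    proof (intro allI impI)
      fix x assume "x < d"
      then show "aut_section d f x = aut_section d g x" using fun_cong[OF e2, of x] by simp
    qed
    ultimately show "f = g" using aut_eq[OF fa ga] by blast
  qed
  have c1: "card (W S0 l0 n) \<le> card L1 * card T"
  proof -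
    have "card (W S0 l0 n) \<le> card (L1 \<times> T)"
      by (rule card_inj_on_le[OF inj img]) (use finL finT in auto)
    then show ?thesis by (simp add: card_cartesian_product)
  qed
  have c2: "real (card T) \<le> a^n * (\<Sum>h\<in>W S1 l1 n. (1/a)^(pn1 h))^d"
  proof -
    have "real (card T) = (\<Sum>t\<in>T. 1)" by simp
    also have "\<dots> \<le> (\<Sum>t\<in>T. a^n * (\<Prod>i<d. (1/a)^(pn1 (t i))))"
    proof (rule sum_mono)
      fix t assume t: "t \<in> T"
      define s where "s = (\<Sum>i<d. pn1 (t i))"
      have sn: "s \<le> n" using t unfolding T_def s_def by auto
      have "(\<Prod>i<d. (1/a)^(pn1 (t i))) = (1/a)^s" unfolding s_def by (simp add: power_sum)
      also have "\<dots> = 1 / a^s" by (simp add: power_one_over)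
      finally have pe: "(\<Prod>i<d. (1/a)^(pn1 (t i))) = 1 / a^s" .
      have "a^s \<le> a^n" by (rule power_increasing[OF sn a])
      moreover have "a^s > 0" using a by simp
      ultimately show "1 \<le> a^n * (\<Prod>i<d. (1/a)^(pn1 (t i)))" unfolding pe by (simp add: field_simps)
    qed
    also have "\<dots> \<le> (\<Sum>t\<in>P. a^n * (\<Prod>i<d. (1/a)^(pn1 (t i))))"
      by (rule sum_mono2[OF finP]) (use a in \<open>auto simp: T_def intro!: prod_nonneg mult_nonneg_nonneg\<close>)
    also have "\<dots> = a^n * (\<Sum>t\<in>P. (\<Prod>i<d. (1/a)^(pn1 (t i))))" by (simp add: sum_distrib_left)
    also have "(\<Sum>t\<in>P. (\<Prod>i<d. (1/a)^(pn1 (t i)))) = (\<Prod>i<d. \<Sum>h\<in>W S1 l1 n. (1/a)^(pn1 h))"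
      unfolding P_def by (rule prod_sum_PiE[symmetric]) (use fin1 in auto)
    also have "\<dots> = (\<Sum>h\<in>W S1 l1 n. (1/a)^(pn1 h))^d" by simp
    finally show ?thesis .
  qed
  have "real (card (W S0 l0 n)) \<le> real (card L1) * real (card T)"
    using c1 by (metis of_nat_le_iff of_nat_mult)
  also have "\<dots> \<le> real (card L1) * (a^n * (\<Sum>h\<in>W S1 l1 n. (1/a)^(pn1 h))^d)"
    by (rule mult_left_mono[OF c2]) simp
  finally show ?thesis unfolding L1_def pn1_def .
qed

lemma sum_bound:
  assumes fin: "finite (W S l n)" and bd: "\<And>m. real (card (W S l m)) \<le> C * a^m" and a: "a > (0::real)"
    and finm: "\<And>m. finite (W S l m)"
  shows "(\<Sum>h\<in>W S l n. (1/a)^(word_pnorm S l h)) \<le> real (n+1) * C"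
proof -
  define pn where "pn = word_pnorm S l"
  have im: "pn ` W S l n \<subseteq> {..n}" using W_pnorm unfolding pn_def by auto
  have "(\<Sum>h\<in>W S l n. (1/a)^(pn h)) = (\<Sum>m\<le>n. \<Sum>h\<in>{h. h \<in> W S l n \<and> pn h = m}. (1/a)^(pn h))"
    by (rule sum.group[symmetric, OF fin _ im]) simp
  also have "\<dots> \<le> (\<Sum>m\<le>n. C)"
  proof (rule sum_mono)
    fix m assume "m \<in> {..n}"
    have sub: "{h. h \<in> W S l n \<and> pn h = m} \<subseteq> W S l m"
      using W_sub_gen ball_eq[of S l m] unfolding pn_def by blast
    have "(\<Sum>h\<in>{h. h \<in> W S l n \<and> pn h = m}. (1/a)^(pn h)) = (\<Sum>h\<in>{h. h \<in> W S l n \<and> pn h = m}. (1/a)^m)"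
      by (rule sum.cong) auto
    also have "\<dots> = real (card {h. h \<in> W S l n \<and> pn h = m}) * (1/a)^m" by simp
    also have "\<dots> \<le> real (card (W S l m)) * (1/a)^m"
      by (rule mult_right_mono) (use card_mono[OF finm sub] a in auto)
    also have "\<dots> \<le> (C * a^m) * (1/a)^m" by (rule mult_right_mono[OF bd]) (use a in auto)
    also have "\<dots> = C" using a by (simp add: power_one_over)
    finally show "(\<Sum>h\<in>{h. h \<in> W S l n \<and> pn h = m}. (1/a)^(pn h)) \<le> C" .
  qed
  also have "\<dots> = real (n+1) * C" by simp
  finally show ?thesis unfolding pn_def .
qed


lemma sub_iter:
  fixes a :: "nat \<Rightarrow> real"
  assumes a1: "\<And>n. a n \<ge> 1" and sub: "\<And>m n. a (m+n) \<le> a m * a n"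
  shows "a (q*k + r) \<le> a k ^ q * a r"
proof (induction q)
  case 0 then show ?case by simp
next
  case (Suc q)
  have "a (Suc q * k + r) = a (k + (q*k+r))" by (simp add: algebra_simps)
  also have "\<dots> \<le> a k * a (q*k+r)" by (rule sub)
  also have "\<dots> \<le> a k * (a k ^ q * a r)"
    using Suc a1[of k] by (intro mult_left_mono) auto
  finally show ?case by (simp add: algebra_simps)
qed

lemma fekete_mult:
  fixes a :: "nat \<Rightarrow> real"
  assumes a1: "\<And>n. a n \<ge> 1" and sub: "\<And>m n. a (m+n) \<le> a m * a n"
  shows "convergent (\<lambda>n. root n (a n))"
proof -
  define X where "X = (\<lambda>n. root n (a n)) ` {1..}"
  define L where "L = Inf X"
  have Xne: "X \<noteq> {}" unfolding X_def by auto
  have Xge: "\<And>x. x \<in> X \<Longrightarrow> 1 \<le> x" unfolding X_def using a1 by auto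
  have bdd: "bdd_below X" using Xge by (intro bdd_belowI[of _ 1]) auto
  have low: "L \<le> root n (a n)" if "n \<ge> 1" for n
    unfolding L_def by (rule cInf_lower[OF _ bdd]) (use that in \<open>auto simp: X_def\<close>)
  have "(\<lambda>n. root n (a n)) \<longlonglongrightarrow> L"
  proof (rule order_tendstoI)
    fix y assume "y < L"
    then show "eventually (\<lambda>n. y < root n (a n)) sequentially"
      using low by (auto simp: eventually_sequentially intro: less_le_trans)
  next
    fix y assume "L < y"
    define e where "e = y - L"
    have e: "e > 0" using \<open>L < y\<close> e_def by simp
    have "Inf X < L + e/2" using e L_def by simp
    then obtain x where "x \<in> X" "x < L + e/2" using cInf_less_iff[OF Xne bdd] by auto
    then obtain k where k1: "k \<ge> 1" and kx: "root k (a k) < L + e/2" unfolding X_def by auto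
    define M where "M = Max (a ` {..<k})"
    have M: "\<And>r. r < k \<Longrightarrow> a r \<le> M" unfolding M_def by auto
    have M1: "M \<ge> 1" using M[of 0] a1[of 0] k1 by auto
    have "(\<lambda>n. root k (a k) * root n M) \<longlonglongrightarrow> root k (a k) * 1"
      by (intro tendsto_mult tendsto_const LIMSEQ_root_const) (use M1 in auto)
    moreover have "root k (a k) * 1 < y" using kx e_def e by linarith
    ultimately have ev: "eventually (\<lambda>n. root k (a k) * root n M < y) sequentially"
      by (rule order_tendstoD(2))
    have bound: "root n (a n) \<le> root k (a k) * root n M" if n1: "n \<ge> 1" for n
    proof -
      define q where "q = n div k"
      define r where "r = n mod k"
      have nqr: "n = q*k + r" unfolding q_def r_def by simp
      have rk: "r < k" unfolding r_def using k1 by simp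
      have "a n \<le> a k ^ q * a r" using sub_iter[OF a1 sub, of q k r] nqr by simp
      also have "\<dots> \<le> a k ^ q * M" using M[OF rk] a1[of k] by (intro mult_left_mono) auto
      finally have an: "a n \<le> a k ^ q * M" .
      have ak: "a k \<ge> 1" by (rule a1)
      have "root n (a n) \<le> root n (a k ^ q * M)" using an n1 by (intro real_root_le_mono) auto
      also have "\<dots> = root n (a k ^ q) * root n M" by (rule real_root_mult)
      also have "root n (a k ^ q) = (a k ^ q) powr (1 / real n)"
        using n1 ak by (intro root_powr_inverse) auto
      also have "\<dots> = a k powr (real q / real n)"
        using ak by (simp add: powr_realpow[symmetric] powr_powr)
      also have "\<dots> \<le> a k powr (1 / real k)"
      proof (rule powr_mono[OF _ ak])
        have "real q * real k \<le> real n" using nqr by (simp flip: of_nat_mult)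
        then show "real q / real n \<le> 1 / real k" using n1 k1
          by (simp add: field_simps)
      qed
      also have "\<dots> = root k (a k)" using k1 ak by (simp add: root_powr_inverse)
      finally show ?thesis using M1 by (meson mult_right_mono real_root_ge_zero order.trans zero_le_one)
    qed
    from ev show "eventually (\<lambda>n. root n (a n) < y) sequentially"
      unfolding eventually_sequentially using bound
      by (metis le_less_trans nat_le_linear le_trans one_le_numeral order.refl le_add2 add.commute Suc_eq_plus1 not_less_eq_eq)
  qed
  then show ?thesis by (rule convergentI)
qed

lemma root_succ_lim: "(\<lambda>n::nat. root n (real (n+1))) \<longlonglongrightarrow> 1"
proof -
  have "(\<lambda>n::nat. (real n + 1) powr (1 / real n)) \<longlonglongrightarrow> 1" by real_asymp
  moreover have "eventually (\<lambda>n. (real n + 1) powr (1 / real n) = root n (real (n+1))) sequentially"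
    unfolding eventually_sequentially by (intro exI[of _ 1]) (auto simp: root_powr_inverse add.commute)
  ultimately show ?thesis by (rule Lim_transform_eventually)
qed

lemma gen_mono: "A \<subseteq> B \<Longrightarrow> generated A \<subseteq> generated B"
proof
  fix x assume A: "A \<subseteq> B" and "x \<in> generated A"
  then obtain xs where "xs \<in> lists A" "x = prod_word xs" unfolding generated_def by blast
  moreover have "lists A \<subseteq> lists B" using A by (rule lists_mono)
  ultimately show "x \<in> generated B" unfolding generated_def by blast
qed

theorem mainTheorem5:
  fixes d :: nat
    and G S :: "nat \<Rightarrow> (nat list \<Rightarrow> nat list) set"
    and l :: "nat \<Rightarrow> (nat list \<Rightarrow> nat list) \<Rightarrow> nat"
  assumes "d \<ge> 2"
    and "non_l1_expanding_similar_family d G S l"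
  shows "\<forall>\<nu>. exp_growth_rate G S l \<nu> \<le> exp_growth_rate G S l (Suc \<nu>)"
proof
  fix \<nu>
  have F0: "\<forall>\<mu>. finite (S \<mu>) \<and> S \<mu> \<subseteq> {f. tree_aut d f} \<and>
        (\<forall>s \<in> S \<mu>. aut_inv d s \<in> S \<mu>) \<and>
        G \<mu> = generated (S \<mu>) \<and>
        level_transitive d (G \<mu>) \<and>
        (\<forall>s \<in> S \<mu>. l \<mu> s \<in> {0, 1}) \<and>
        finite (subgroup_gen d {s \<in> S \<mu>. l \<mu> s = 0}) \<and>
        (\<forall>g \<in> G \<mu>. (\<forall>x < d. aut_section d g x \<in> G (Suc \<mu>)) \<and>
           (\<Sum>x<d. word_pnorm (S (Suc \<mu>)) (l (Suc \<mu>)) (aut_section d g x))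
              \<le> word_pnorm (S \<mu>) (l \<mu>) g)"
    using assms(2) unfolding non_l1_expanding_similar_family_def .
  note F = spec[OF F0]
  have fS: "finite (S \<mu>)" for \<mu> using F[of \<mu>] by (elim conjE)
  have aut: "S \<mu> \<subseteq> {f. tree_aut d f}" for \<mu> using F[of \<mu>] by (elim conjE)
  have Gd: "G \<mu> = generated (S \<mu>)" for \<mu> using F[of \<mu>] by (elim conjE)
  have l01: "\<forall>s\<in>S \<mu>. l \<mu> s \<in> {0,1}" for \<mu> using F[of \<mu>] by (elim conjE)
  have l1: "\<And>\<mu>. \<forall>s\<in>S \<mu>. l \<mu> s \<le> 1"
  proof
    fix \<mu> s assume "s \<in> S \<mu>" then show "l \<mu> s \<le> 1" using l01[of \<mu>] by auto
  qed
  have fsg: "finite (subgroup_gen d {s \<in> S \<mu>. l \<mu> s = 0})" for \<mu> using F[of \<mu>] by (elim conjE)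
  have sec0: "\<forall>g \<in> G \<mu>. (\<forall>x < d. aut_section d g x \<in> G (Suc \<mu>)) \<and>
           (\<Sum>x<d. word_pnorm (S (Suc \<mu>)) (l (Suc \<mu>)) (aut_section d g x))
              \<le> word_pnorm (S \<mu>) (l \<mu>) g" for \<mu> using F[of \<mu>] by (elim conjE)
  have fH: "\<And>\<mu>. finite (generated {s\<in>S \<mu>. l \<mu> s = 0})"
  proof -
    fix \<mu>
    have "generated {s\<in>S \<mu>. l \<mu> s = 0} \<subseteq> subgroup_gen d {s\<in>S \<mu>. l \<mu> s = 0}"
      unfolding subgroup_gen_def by (rule gen_mono) auto
    then show "finite (generated {s\<in>S \<mu>. l \<mu> s = 0})" using fsg[of \<mu>] finite_subset by blast
  qed
  have sec: "\<And>\<mu>. \<forall>g\<in>generated (S \<mu>). (\<forall>x<d. aut_section d g x \<in> generated (S (Suc \<mu>))) \<and>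
        (\<Sum>x<d. word_pnorm (S (Suc \<mu>)) (l (Suc \<mu>)) (aut_section d g x)) \<le> word_pnorm (S \<mu>) (l \<mu>) g"
    using sec0 unfolding Gd .
  define B where "B = (\<lambda>\<mu> n. real (card (W (S \<mu>) (l \<mu>) n)))"
  have B1: "\<And>\<mu> n. B \<mu> n \<ge> 1" unfolding B_def using card_W_pos[OF fS fH] by simp
  have finW: "\<And>\<mu> n. finite (W (S \<mu>) (l \<mu>) n)" using finite_W[OF fS fH] .
  have conv: "\<And>\<mu>. (\<lambda>n. root n (B \<mu> n)) \<longlonglongrightarrow> exp_growth_rate G S l \<mu>"
  proof -
    fix \<mu>
    have "convergent (\<lambda>n. root n (B \<mu> n))"
    proof (rule fekete_mult)
      show "\<And>n. 1 \<le> B \<mu> n" by (rule B1)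
      show "\<And>m n. B \<mu> (m+n) \<le> B \<mu> m * B \<mu> n"
        unfolding B_def using card_W_mult[OF fS fH l1] by (metis of_nat_le_iff of_nat_mult)
    qed
    moreover have "exp_growth_rate G S l \<mu> = lim (\<lambda>n. root n (B \<mu> n))"
      unfolding exp_growth_rate_def growth_fun_def B_def Gd ball_eq ..
    ultimately show "(\<lambda>n. root n (B \<mu> n)) \<longlonglongrightarrow> exp_growth_rate G S l \<mu>"
      by (simp add: convergent_LIMSEQ_iff)
  qed
  define La where "La = exp_growth_rate G S l \<nu>"
  define Lb where "Lb = exp_growth_rate G S l (Suc \<nu>)"
  have Lb1: "Lb \<ge> 1"
    unfolding Lb_def by (rule LIMSEQ_le_const[OF conv]) (rule exI[of _ 1], use B1 in simp)
  show "exp_growth_rate G S l \<nu> \<le> exp_growth_rate G S l (Suc \<nu>)"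
  proof (rule field_le_epsilon)
    fix e :: real assume e: "e > 0"
    define a where "a = Lb + e"
    have a1: "a \<ge> 1" and aLb: "Lb < a" using Lb1 e unfolding a_def by auto
    have "eventually (\<lambda>m. root m (B (Suc \<nu>) m) < a) sequentially"
      using order_tendstoD(2)[OF conv aLb[unfolded Lb_def]] .
    then obtain N where N: "\<And>m. m \<ge> N \<Longrightarrow> root m (B (Suc \<nu>) m) < a"
      unfolding eventually_sequentially by blast
    define C where "C = B (Suc \<nu>) (N+1)"
    have C1: "C \<ge> 1" unfolding C_def by (rule B1)
    have bd: "B (Suc \<nu>) m \<le> C * a^m" for m
    proof (cases "m \<ge> N+1")
      case True
      then have m0: "m > 0" by simp
      have "B (Suc \<nu>) m = root m (B (Suc \<nu>) m) ^ m" using m0 B1[of "Suc \<nu>" m] by simp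
      also have "\<dots> \<le> a ^ m" using N[of m] True B1[of "Suc \<nu>" m] by (intro power_mono) auto
      also have "\<dots> \<le> C * a^m" using C1 a1 by simp
      finally show ?thesis .
    next
      case False
      have "B (Suc \<nu>) m \<le> C" unfolding C_def B_def
        using card_mono[OF finW W_mono[of m "N+1"]] False by simp
      also have "\<dots> \<le> C * a^m" using C1 a1 by simp
      finally show ?thesis .
    qed
    define K where "K = real (card (PiE {..<d} (\<lambda>_. (\<lambda>b::nat. [b]) ` {..<d})))"
    have K0: "K \<ge> 0" unfolding K_def by simp
    define K' where "K' = max 1 (K * C^d)"
    have Abd: "B \<nu> n \<le> K' * real (n+1)^d * a^n" for n
    proof -
      have "B \<nu> n \<le> K * (a^n * (\<Sum>h\<in>W (S (Suc \<nu>)) (l (Suc \<nu>)) n. (1/a)^(word_pnorm (S (Suc \<nu>)) (l (Suc \<nu>)) h))^d)"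
        unfolding B_def K_def by (rule count[OF aut sec finW a1])
      also have "\<dots> \<le> K * (a^n * (real (n+1) * C)^d)"
      proof (intro mult_left_mono power_mono)
        show "(\<Sum>h\<in>W (S (Suc \<nu>)) (l (Suc \<nu>)) n. (1/a)^(word_pnorm (S (Suc \<nu>)) (l (Suc \<nu>)) h)) \<le> real (n+1) * C"
          by (rule sum_bound[OF finW _ _ finW]) (use bd a1 B_def in auto)
      qed (use a1 K0 in \<open>auto intro: sum_nonneg\<close>)
      also have "\<dots> = (K * C^d) * real (n+1)^d * a^n" by (simp add: power_mult_distrib)
      also have "\<dots> \<le> K' * real (n+1)^d * a^n" unfolding K'_def
        by (intro mult_right_mono) (use a1 in auto)
      finally show ?thesis .
    qed
    define u where "u = (\<lambda>n. root n K' * root n (real (n+1)) ^ d * a)"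
    have ulim: "u \<longlonglongrightarrow> 1 * 1 ^ d * a" unfolding u_def
      by (intro tendsto_mult tendsto_power tendsto_const LIMSEQ_root_const root_succ_lim)
        (simp add: K'_def)
    have le: "\<forall>n\<ge>1. root n (B \<nu> n) \<le> u n"
    proof (intro allI impI)
      fix n :: nat assume n: "n \<ge> 1"
      have "root n (B \<nu> n) \<le> root n (K' * real (n+1)^d * a^n)"
        using Abd n by (intro real_root_le_mono) auto
      also have "\<dots> = u n" unfolding u_def using n a1
        by (simp add: real_root_mult real_root_power real_root_power_cancel)
      finally show "root n (B \<nu> n) \<le> u n" .
    qed
    have "exp_growth_rate G S l \<nu> \<le> 1 * 1 ^ d * a"
      by (rule LIMSEQ_le[OF conv ulim]) (rule exI[of _ 1], use le in simp)
    then show "exp_growth_rate G S l \<nu> \<le> exp_growth_rate G S l (Suc \<nu>) + e"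
      unfolding a_def Lb_def by simp
  qed
qed

end
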